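(* Let $n\ge 1$ and consider the hydrodynamic type system $F^i = u^i_t - V^i_j(u)u^j_x=0$, $i=1,\dots,n$, where $u^i=u^i(t,x)$ and the $V^i_j$ are smooth functions of $u=(u^1,\dots,u^n)$. Let $A$ be a local first-order homogeneous Hamiltonian operator, written in odd variables as $A(\mathbf p)^i = g^{ij}(u)p_{j,x} + \Gamma^{ij}_k(u)u^k_x p_j$, with $\det(g^{ij})\neq 0$ and satisfying the Hamiltonian conditions $$g^{ij}=g^{ji},\quad g^{ij}_{,k}=\Gamma^{ij}_k+\Gamma^{ji}_k,\quad g^{ik}\Gamma^{jl}_k=g^{jk}\Gamma^{il}_k,\quad \Gamma^{ij}_{l,k}-\Gamma^{ij}_{k,l}+\Gamma^i_{ks}\Gamma^{sj}_l-\Gamma^j_{ks}\Gamma^{si}_l=0,$$ where $\Gamma^i_{jk}=-g_{js}\Gamma^{si}_k$ and $(g_{ij})$ is the inverse matrix of $(g^{ij})$. Then the equation $\ell_F(A(\mathbf p))=0$ on the cotangent covering holds if and only if, identically in $u$ and for all values of the free indices, the following equations hold: $$V^i_kg^{kj}-V^j_kg^{ki}=0,$$ $$g^{ij}_{,k}V^k_m+g^{ik}(V^j_{k,m}-V^j_{m,k})+g^{ik}V^j_{k,m}+\Gamma^{ik}_mV^j_k-V^i_{m,k}g^{kj}-V^i_kg^{kj}_{,m}-V^i_k\Gamma^{kj}_m=0,$$ $$g^{ik}\left(V^j_{k,h}-V^j_{h,k}\right)+\Gamma^{ij}_kV^k_h-\Gamma^{kj}_hV^i_k=0,$$ $$\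begin{aligned}&g^{ik}\left(V^j_{k,ml}+V^j_{k,lm}-V^j_{m,kl}-V^j_{l,km}\right)+\Gamma^{ij}_{m,k}V^k_l+\Gamma^{ij}_{l,k}V^k_m+\Gamma^{ij}_kV^k_{l,m}+\Gamma^{ij}_kV^k_{m,l}\\&+\Gamma^{ik}_lV^j_{k,m}+\Gamma^{ik}_mV^j_{k,l}-\Gamma^{ik}_lV^j_{m,k}-\Gamma^{ik}_mV^j_{l,k}-\Gamma^{kj}_mV^i_{l,k}-\Gamma^{kj}_lV^i_{m,k}-\Gamma^{kj}_{m,l}V^i_k-\Gamma^{kj}_{l,m}V^i_k=0.\end{aligned}$$
   Context: Summation over repeated indices is understood. An index after a comma denotes partial derivative with respect to the corresponding field variable: $V^j_{k,m}=\partial V^j_k/\partial u^m$, $V^j_{k,ml}=\partial^2 V^j_k/\partial u^l\partial u^m$, $g^{ij}_{,k}=\partial g^{ij}/\partial u^k$, etc. The linearization of $F$ is $\ell_F(\varphi)^i = D_t\varphi^i - V^i_{j,k}u^j_x\varphi^k - V^i_jD_x\varphi^j$, where $D_t,D_x$ are total derivatives. The cotangent covering of the system is the system in the variables $u^i$ and new (odd) variables $p_i$: $u^i_t=V^i_ju^j_x$, $p_{i,t}=(V^k_{i,j}-V^k_{j,i})u^j_xp_k+V^k_ip_{k,x}$. The equation $\ell_F(A(\mathbf p))=0$ "on the cotangent covering" means that the expression $\ell_F(A(\mathbf p))$, after replacing $u_t$, $p_t$ and all their $x$-derivatives by means of the cotangent covering system and its differential consequences, vanishes identically as a function of $u,u_x,u_{xx},\dots,p,p_x,p_{xx},\dots$.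 *)

theory Defs
  imports "HOL-Analysis.Analysis"
begin

text \<open>Field variables u = (u^1,...,u^n) are points of type 'n => real ('n a finite index type,
  n = CARD('n) >= 1).  A function of u is h :: ('n => real) => real.\<close>

definition pd :: "(('n \<Rightarrow> real) \<Rightarrow> real) \<Rightarrow> 'n \<Rightarrow> ('n \<Rightarrow> real) \<Rightarrow> real" where
  "pd h k u = deriv (\<lambda>s. h (u(k := s))) (u k)"

fun pds :: "'n list \<Rightarrow> (('n \<Rightarrow> real) \<Rightarrow> real) \<Rightarrow> ('n \<Rightarrow> real) \<Rightarrow> real" where
  "pds [] h = h"
| "pds (k # ks) h = pd (pds ks h) k"

definition smooth_fn :: "('n \<Rightarrow> real) set \<Rightarrow> (('n \<Rightarrow> real) \<Rightarrow> real) \<Rightarrow> bool" where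
  "smooth_fn \<Omega> h \<longleftrightarrow>
     (\<forall>ks. continuous_on \<Omega> (pds ks h) \<and>
       (\<forall>k. \<forall>u\<in>\<Omega>. (\<lambda>s. pds ks h (u(k := s))) differentiable (at (u k))))"

text \<open>Jet space (internal coordinates of the cotangent covering): a point is a pair (a, b)
  with a m i = m-th x-derivative of u^i and b m i = m-th x-derivative of p_i.
  Functions on the jet space depend on finitely many coordinates.\<close>

type_synonym 'n jet = "nat \<Rightarrow> 'n \<Rightarrow> real"
type_synonym 'n jfun = "'n jet \<Rightarrow> 'n jet \<Rightarrow> real"

definition dU :: "'n jfun \<Rightarrow> nat \<Rightarrow> 'n \<Rightarrow> 'n jfun" where
  "dU f m i a b = deriv (\<lambda>s. f (a(m := (a m)(i := s))) b) (a m i)"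

definition dP :: "'n jfun \<Rightarrow> nat \<Rightarrow> 'n \<Rightarrow> 'n jfun" where
  "dP f m i a b = deriv (\<lambda>s. f a (b(m := (b m)(i := s)))) (b m i)"

text \<open>Total x-derivative of a jet function depending on jets of order at most N.\<close>
definition Dx :: "nat \<Rightarrow> 'n::finite jfun \<Rightarrow> 'n jfun" where
  "Dx N f a b = (\<Sum>m\<le>N. \<Sum>i\<in>UNIV. dU f m i a b * a (Suc m) i + dP f m i a b * b (Suc m) i)"

fun Dxn :: "nat \<Rightarrow> nat \<Rightarrow> 'n::finite jfun \<Rightarrow> 'n jfun" where
  "Dxn 0 N f = f"
| "Dxn (Suc k) N f = Dx (N + k) (Dxn k N f)"

text \<open>Right-hand sides of the cotangent covering:
  u^i_t = V^i_j u^j_x,  p_{i,t} = (V^k_{i,j} - V^k_{j,i}) u^j_x p_k + V^k_i p_{k,x}.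
  Here V i j = V^i_j.\<close>
definition Ut :: "('n::finite \<Rightarrow> 'n \<Rightarrow> ('n \<Rightarrow> real) \<Rightarrow> real) \<Rightarrow> 'n \<Rightarrow> 'n jfun" where
  "Ut V i a b = (\<Sum>j\<in>UNIV. V i j (a 0) * a 1 j)"

definition Pt :: "('n::finite \<Rightarrow> 'n \<Rightarrow> ('n \<Rightarrow> real) \<Rightarrow> real) \<Rightarrow> 'n \<Rightarrow> 'n jfun" where
  "Pt V i a b = (\<Sum>k\<in>UNIV. \<Sum>j\<in>UNIV. (pd (V k i) j (a 0) - pd (V k j) i (a 0)) * a 1 j * b 0 k)
              + (\<Sum>k\<in>UNIV. V k i (a 0) * b 1 k)"

definition Dt :: "('n::finite \<Rightarrow> 'n \<Rightarrow> ('n \<Rightarrow> real) \<Rightarrow> real) \<Rightarrow> nat \<Rightarrow> 'n jfun \<Rightarrow> 'n jfun" where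
  "Dt V N f a b = (\<Sum>m\<le>N. \<Sum>i\<in>UNIV.
       dU f m i a b * Dxn m 1 (Ut V i) a b + dP f m i a b * Dxn m 1 (Pt V i) a b)"

text \<open>The operator A(p)^i = g^{ij} p_{j,x} + Gamma^{ij}_k u^k_x p_j  (G i j = g^{ij},
  Gam i j k = Gamma^{ij}_k).\<close>
definition Aop :: "('n::finite \<Rightarrow> 'n \<Rightarrow> ('n \<Rightarrow> real) \<Rightarrow> real) \<Rightarrow> ('n \<Rightarrow> 'n \<Rightarrow> 'n \<Rightarrow> ('n \<Rightarrow> real) \<Rightarrow> real)
    \<Rightarrow> 'n \<Rightarrow> 'n jfun" where
  "Aop G Gam i a b = (\<Sum>j\<in>UNIV. G i j (a 0) * b 1 j)
                   + (\<Sum>j\<in>UNIV. \<Sum>k\<in>UNIV. Gam i j k (a 0) * a 1 k * b 0 j)"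

text \<open>Linearization ell_F(phi)^i = D_t phi^i - V^i_{j,k} u^j_x phi^k - V^i_j D_x phi^j,
  with D_t computed on the cotangent covering; phi = A(p) has order 1.\<close>
definition ellFA :: "('n::finite \<Rightarrow> 'n \<Rightarrow> ('n \<Rightarrow> real) \<Rightarrow> real)
    \<Rightarrow> ('n \<Rightarrow> 'n \<Rightarrow> ('n \<Rightarrow> real) \<Rightarrow> real) \<Rightarrow> ('n \<Rightarrow> 'n \<Rightarrow> 'n \<Rightarrow> ('n \<Rightarrow> real) \<Rightarrow> real)
    \<Rightarrow> 'n \<Rightarrow> 'n jfun" where
  "ellFA V G Gam i a b =
     Dt V 1 (Aop G Gam i) a b
     - (\<Sum>j\<in>UNIV. \<Sum>k\<in>UNIV. pd (V i j) k (a 0) * a 1 j * Aop G Gam k a b)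
     - (\<Sum>j\<in>UNIV. V i j (a 0) * Dx 1 (Aop G Gam j) a b)"

definition gmat :: "('n::finite \<Rightarrow> 'n \<Rightarrow> ('n \<Rightarrow> real) \<Rightarrow> real) \<Rightarrow> ('n \<Rightarrow> real) \<Rightarrow> real^'n^'n" where
  "gmat G u = (\<chi> i j. G i j u)"

definition glow :: "('n::finite \<Rightarrow> 'n \<Rightarrow> ('n \<Rightarrow> real) \<Rightarrow> real) \<Rightarrow> 'n \<Rightarrow> 'n \<Rightarrow> ('n \<Rightarrow> real) \<Rightarrow> real" where
  "glow G i j u = matrix_inv (gmat G u) $ i $ j"

definition Gam_low :: "('n::finite \<Rightarrow> 'n \<Rightarrow> ('n \<Rightarrow> real) \<Rightarrow> real) \<Rightarrow> ('n \<Rightarrow> 'n \<Rightarrow> 'n \<Rightarrow> ('n \<Rightarrow> real) \<Rightarrow> real)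
    \<Rightarrow> 'n \<Rightarrow> 'n \<Rightarrow> 'n \<Rightarrow> ('n \<Rightarrow> real) \<Rightarrow> real" where
  "Gam_low G Gam i j k u = - (\<Sum>s\<in>UNIV. glow G j s u * Gam s i k u)"

end

theory Submission
  imports Defs
begin


lemma deriv_eqI: "DERIV f x :> D \<Longrightarrow> D = T \<Longrightarrow> deriv f x = T"
  using DERIV_imp_deriv by blast

lemma coefD:
  assumes "smooth_fn \<Omega> h" "a 0 \<in> \<Omega>"
  shows "((\<lambda>s. pds ks h ((a(m := (a m)(i := s))) 0)) has_real_derivative
           (if m = 0 then pd (pds ks h) i (a 0) else 0)) (at (a m i))"
proof (cases "m = 0")
  case True
  have "(\<lambda>s. pds ks h ((a 0)(i := s))) differentiable (at (a 0 i))"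
    using assms unfolding smooth_fn_def by blast
  then have "((\<lambda>s. pds ks h ((a 0)(i := s))) has_real_derivative pd (pds ks h) i (a 0)) (at (a 0 i))"
    unfolding pd_def by (simp add: DERIV_deriv_iff_real_differentiable)
  then show ?thesis using True by simp
next
  case False
  then show ?thesis by simp
qed

lemma coefD0:
  assumes "smooth_fn \<Omega> h" "a 0 \<in> \<Omega>"
  shows "((\<lambda>s. h ((a(m := (a m)(i := s))) 0)) has_real_derivative
           (if m = 0 then pd h i (a 0) else 0)) (at (a m i))"
  using coefD[where ks="[]" and a=a and h=h and \<Omega>=\<Omega>, OF assms] by (simp only: pds.simps)

lemma coefD1:
  assumes "smooth_fn \<Omega> h" "a 0 \<in> \<Omega>"
  shows "((\<lambda>s. pd h j ((a(m := (a m)(i := s))) 0)) has_real_derivative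
           (if m = 0 then pd (pd h j) i (a 0) else 0)) (at (a m i))"
  using coefD[where ks="[j]" and a=a and h=h and \<Omega>=\<Omega>, OF assms] by (simp only: pds.simps)

lemma coordD:
  "((\<lambda>s. (a(m := (a m)(i := s))) m' i') has_real_derivative
           (if m' = m \<and> i' = i then 1 else 0)) (at x)"
  by (cases "m' = m"; cases "i' = i") auto


lemma ifm: "(if P then 1 else 0) * (x::real) = (if P then x else 0)"
  "(x::real) * (if P then 1 else 0) = (if P then x else 0)"
  "(if P then x else 0) * (z::real) = (if P then x * z else 0)"
  "(z::real) * (if P then x else 0) = (if P then z * x else 0)"
  by auto

lemma sum_if_out: "(\<Sum>x\<in>A. if P then f x else (0::real)) = (if P then (\<Sum>x\<in>A. f x) else 0)"
  by auto

context
  fixes \<Omega> :: "('n::finite \<Rightarrow> real) set"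
    and V :: "'n \<Rightarrow> 'n \<Rightarrow> ('n \<Rightarrow> real) \<Rightarrow> real"
    and G :: "'n \<Rightarrow> 'n \<Rightarrow> ('n \<Rightarrow> real) \<Rightarrow> real"
    and Gam :: "'n \<Rightarrow> 'n \<Rightarrow> 'n \<Rightarrow> ('n \<Rightarrow> real) \<Rightarrow> real"
    and a :: "'n jet" and b :: "'n jet"
  assumes V_smooth: "\<And>i j. smooth_fn \<Omega> (V i j)"
    and G_smooth: "\<And>i j. smooth_fn \<Omega> (G i j)"
    and Gam_smooth: "\<And>i j k. smooth_fn \<Omega> (Gam i j k)"
    and a0: "a 0 \<in> \<Omega>"
begin

lemma cV: "((\<lambda>s. V i j ((a(m := (a m)(i' := s))) 0)) has_real_derivative
           (if m = 0 then pd (V i j) i' (a 0) else 0)) (at (a m i'))"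
  by (rule coefD0[where a=a and \<Omega>=\<Omega>, OF V_smooth a0])
lemma cG: "((\<lambda>s. G i j ((a(m := (a m)(i' := s))) 0)) has_real_derivative
           (if m = 0 then pd (G i j) i' (a 0) else 0)) (at (a m i'))"
  by (rule coefD0[where a=a and \<Omega>=\<Omega>, OF G_smooth a0])
lemma cGam: "((\<lambda>s. Gam i j k ((a(m := (a m)(i' := s))) 0)) has_real_derivative
           (if m = 0 then pd (Gam i j k) i' (a 0) else 0)) (at (a m i'))"
  by (rule coefD0[where a=a and \<Omega>=\<Omega>, OF Gam_smooth a0])
lemma cV1: "((\<lambda>s. pd (V i j) l ((a(m := (a m)(i' := s))) 0)) has_real_derivative
           (if m = 0 then pd (pd (V i j) l) i' (a 0) else 0)) (at (a m i'))"
  by (rule coefD1[where a=a and \<Omega>=\<Omega>, OF V_smooth a0])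

lemma dU_Aop0: "dU (Aop G Gam i) 0 s a b = (\<Sum>j\<in>UNIV. pd (G i j) s (a 0) * b 1 j)
   + (\<Sum>j\<in>UNIV. \<Sum>k\<in>UNIV. pd (Gam i j k) s (a 0) * a 1 k * b 0 j)"
  unfolding dU_def Aop_def
  by (rule deriv_eqI, (rule DERIV_add DERIV_diff DERIV_sum DERIV_mult cG cGam coordD DERIV_const)+, simp add: ifm sum_if_out)

lemma dU_Aop1: "dU (Aop G Gam i) 1 s a b = (\<Sum>j\<in>UNIV. Gam i j s (a 0) * b 0 j)"
  unfolding dU_def Aop_def
  by (rule deriv_eqI, (rule DERIV_add DERIV_diff DERIV_sum DERIV_mult cG cGam coordD DERIV_const)+, simp add: ifm sum_if_out)

lemma dP_Aop0: "dP (Aop G Gam i) 0 s a b = (\<Sum>k\<in>UNIV. Gam i s k (a 0) * a 1 k)"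
  unfolding dP_def Aop_def
  by (rule deriv_eqI, (rule DERIV_add DERIV_diff DERIV_sum DERIV_mult cG coordD DERIV_const)+, simp add: ifm sum_if_out)

lemma dP_Aop1: "dP (Aop G Gam i) 1 s a b = G i s (a 0)"
  unfolding dP_def Aop_def
  by (rule deriv_eqI, (rule DERIV_add DERIV_diff DERIV_sum DERIV_mult cG coordD DERIV_const)+, simp add: ifm sum_if_out)

lemma dU_Ut0: "dU (Ut V i) 0 s a b = (\<Sum>j\<in>UNIV. pd (V i j) s (a 0) * a 1 j)"
  unfolding dU_def Ut_def
  by (rule deriv_eqI, (rule DERIV_add DERIV_diff DERIV_sum DERIV_mult cV coordD DERIV_const)+, simp add: ifm sum_if_out)

lemma dU_Ut1: "dU (Ut V i) 1 s a b = V i s (a 0)"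
  unfolding dU_def Ut_def
  by (rule deriv_eqI, (rule DERIV_add DERIV_diff DERIV_sum DERIV_mult cV coordD DERIV_const)+, simp add: ifm sum_if_out)

lemma dP_Ut: "dP (Ut V i) m s a b = 0"
  unfolding dP_def Ut_def
  by (rule deriv_eqI, (rule DERIV_add DERIV_diff DERIV_sum DERIV_mult cV coordD DERIV_const)+, simp add: ifm sum_if_out)

lemma dU_Pt0: "dU (Pt V i) 0 s a b =
   (\<Sum>k\<in>UNIV. \<Sum>j\<in>UNIV. (pd (pd (V k i) j) s (a 0) - pd (pd (V k j) i) s (a 0)) * a 1 j * b 0 k)
   + (\<Sum>k\<in>UNIV. pd (V k i) s (a 0) * b 1 k)"
  unfolding dU_def Pt_def
  by (rule deriv_eqI, (rule DERIV_add DERIV_diff DERIV_sum DERIV_mult cV cV1 coordD DERIV_const)+, simp add: ifm sum_if_out)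

lemma dU_Pt1: "dU (Pt V i) 1 s a b = (\<Sum>k\<in>UNIV. (pd (V k i) s (a 0) - pd (V k s) i (a 0)) * b 0 k)"
  unfolding dU_def Pt_def
  by (rule deriv_eqI, (rule DERIV_add DERIV_diff DERIV_sum DERIV_mult cV cV1 coordD DERIV_const)+, simp add: ifm sum_if_out)

lemma dP_Pt0: "dP (Pt V i) 0 s a b = (\<Sum>j\<in>UNIV. (pd (V s i) j (a 0) - pd (V s j) i (a 0)) * a 1 j)"
  unfolding dP_def Pt_def
  by (rule deriv_eqI, (rule DERIV_add DERIV_diff DERIV_sum DERIV_mult cV coordD DERIV_const)+, simp add: ifm sum_if_out)

lemma dP_Pt1: "dP (Pt V i) 1 s a b = V s i (a 0)"
  unfolding dP_def Pt_def
  by (rule deriv_eqI, (rule DERIV_add DERIV_diff DERIV_sum DERIV_mult cV coordD DERIV_const)+, simp add: ifm sum_if_out)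

end



lemma sw1: "(\<Sum>a\<in>UNIV. \<Sum>b\<in>UNIV. \<Sum>c\<in>UNIV. f a b c) = (\<Sum>a\<in>UNIV. \<Sum>c\<in>UNIV. \<Sum>b\<in>UNIV. (f a b c :: 'x::comm_monoid_add))"
  by (rule sum.cong[OF refl], rule sum.swap)
lemma sw2: "(\<Sum>a\<in>UNIV. \<Sum>b\<in>UNIV. \<Sum>c\<in>UNIV. \<Sum>d\<in>UNIV. f a b c d) = (\<Sum>a\<in>UNIV. \<Sum>b\<in>UNIV. \<Sum>d\<in>UNIV. \<Sum>c\<in>UNIV. (f a b c d :: 'x::comm_monoid_add))"
  by (rule sum.cong[OF refl], rule sum.cong[OF refl], rule sum.swap)

lemma P3_bca: "(\<Sum>a\<in>UNIV. \<Sum>b\<in>UNIV. \<Sum>c\<in>UNIV. f a b c) = (\<Sum>b\<in>UNIV. \<Sum>c\<in>UNIV. \<Sum>a\<in>UNIV. f a b c)"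
proof -
  have "(\<Sum>a\<in>UNIV. \<Sum>b\<in>UNIV. \<Sum>c\<in>UNIV. f a b c) = (\<Sum>b\<in>UNIV. \<Sum>a\<in>UNIV. \<Sum>c\<in>UNIV. f a b c)" by (rule sum.swap)
  also have "... = (\<Sum>b\<in>UNIV. \<Sum>c\<in>UNIV. \<Sum>a\<in>UNIV. f a b c)" by (rule sw1)
  finally show ?thesis .
qed

lemma P3_cba: "(\<Sum>a\<in>UNIV. \<Sum>b\<in>UNIV. \<Sum>c\<in>UNIV. f a b c) = (\<Sum>c\<in>UNIV. \<Sum>b\<in>UNIV. \<Sum>a\<in>UNIV. f a b c)"
proof -
  have "(\<Sum>a\<in>UNIV. \<Sum>b\<in>UNIV. \<Sum>c\<in>UNIV. f a b c) = (\<Sum>a\<in>UNIV. \<Sum>c\<in>UNIV. \<Sum>b\<in>UNIV. f a b c)" by (rule sw1)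
  also have "... = (\<Sum>c\<in>UNIV. \<Sum>a\<in>UNIV. \<Sum>b\<in>UNIV. f a b c)" by (rule sum.swap)
  also have "... = (\<Sum>c\<in>UNIV. \<Sum>b\<in>UNIV. \<Sum>a\<in>UNIV. f a b c)" by (rule sw1)
  finally show ?thesis .
qed

lemma P3_cab: "(\<Sum>a\<in>UNIV. \<Sum>b\<in>UNIV. \<Sum>c\<in>UNIV. f a b c) = (\<Sum>c\<in>UNIV. \<Sum>a\<in>UNIV. \<Sum>b\<in>UNIV. f a b c)"
proof -
  have "(\<Sum>a\<in>UNIV. \<Sum>b\<in>UNIV. \<Sum>c\<in>UNIV. f a b c) = (\<Sum>a\<in>UNIV. \<Sum>c\<in>UNIV. \<Sum>b\<in>UNIV. f a b c)" by (rule sw1)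
  also have "... = (\<Sum>c\<in>UNIV. \<Sum>a\<in>UNIV. \<Sum>b\<in>UNIV. f a b c)" by (rule sum.swap)
  finally show ?thesis .
qed

lemma P4_bcda: "(\<Sum>a\<in>UNIV. \<Sum>b\<in>UNIV. \<Sum>c\<in>UNIV. \<Sum>d\<in>UNIV. f a b c d) = (\<Sum>b\<in>UNIV. \<Sum>c\<in>UNIV. \<Sum>d\<in>UNIV. \<Sum>a\<in>UNIV. f a b c d)"
proof -
  have "(\<Sum>a\<in>UNIV. \<Sum>b\<in>UNIV. \<Sum>c\<in>UNIV. \<Sum>d\<in>UNIV. f a b c d) = (\<Sum>b\<in>UNIV. \<Sum>a\<in>UNIV. \<Sum>c\<in>UNIV. \<Sum>d\<in>UNIV. f a b c d)" by (rule sum.swap)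
  also have "... = (\<Sum>b\<in>UNIV. \<Sum>c\<in>UNIV. \<Sum>a\<in>UNIV. \<Sum>d\<in>UNIV. f a b c d)" by (rule sw1)
  also have "... = (\<Sum>b\<in>UNIV. \<Sum>c\<in>UNIV. \<Sum>d\<in>UNIV. \<Sum>a\<in>UNIV. f a b c d)" by (rule sw2)
  finally show ?thesis .
qed

lemma P4_cbda: "(\<Sum>a\<in>UNIV. \<Sum>b\<in>UNIV. \<Sum>c\<in>UNIV. \<Sum>d\<in>UNIV. f a b c d) = (\<Sum>c\<in>UNIV. \<Sum>b\<in>UNIV. \<Sum>d\<in>UNIV. \<Sum>a\<in>UNIV. f a b c d)"
proof -
  have "(\<Sum>a\<in>UNIV. \<Sum>b\<in>UNIV. \<Sum>c\<in>UNIV. \<Sum>d\<in>UNIV. f a b c d) = (\<Sum>b\<in>UNIV. \<Sum>c\<in>UNIV. \<Sum>d\<in>UNIV. \<Sum>a\<in>UNIV. f a b c d)" by (rule P4_bcda)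
  also have "... = (\<Sum>c\<in>UNIV. \<Sum>b\<in>UNIV. \<Sum>d\<in>UNIV. \<Sum>a\<in>UNIV. f a b c d)" by (rule sum.swap)
  finally show ?thesis .
qed

lemma P4_bdca: "(\<Sum>a\<in>UNIV. \<Sum>b\<in>UNIV. \<Sum>c\<in>UNIV. \<Sum>d\<in>UNIV. f a b c d) = (\<Sum>b\<in>UNIV. \<Sum>d\<in>UNIV. \<Sum>c\<in>UNIV. \<Sum>a\<in>UNIV. f a b c d)"
proof -
  have "(\<Sum>a\<in>UNIV. \<Sum>b\<in>UNIV. \<Sum>c\<in>UNIV. \<Sum>d\<in>UNIV. f a b c d) = (\<Sum>b\<in>UNIV. \<Sum>c\<in>UNIV. \<Sum>d\<in>UNIV. \<Sum>a\<in>UNIV. f a b c d)" by (rule P4_bcda)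
  also have "... = (\<Sum>b\<in>UNIV. \<Sum>d\<in>UNIV. \<Sum>c\<in>UNIV. \<Sum>a\<in>UNIV. f a b c d)" by (rule sw1)
  finally show ?thesis .
qed

lemma P4_cdba: "(\<Sum>a\<in>UNIV. \<Sum>b\<in>UNIV. \<Sum>c\<in>UNIV. \<Sum>d\<in>UNIV. f a b c d) = (\<Sum>c\<in>UNIV. \<Sum>d\<in>UNIV. \<Sum>b\<in>UNIV. \<Sum>a\<in>UNIV. f a b c d)"
proof -
  have "(\<Sum>a\<in>UNIV. \<Sum>b\<in>UNIV. \<Sum>c\<in>UNIV. \<Sum>d\<in>UNIV. f a b c d) = (\<Sum>b\<in>UNIV. \<Sum>c\<in>UNIV. \<Sum>d\<in>UNIV. \<Sum>a\<in>UNIV. f a b c d)" by (rule P4_bcda)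
  also have "... = (\<Sum>c\<in>UNIV. \<Sum>b\<in>UNIV. \<Sum>d\<in>UNIV. \<Sum>a\<in>UNIV. f a b c d)" by (rule sum.swap)
  also have "... = (\<Sum>c\<in>UNIV. \<Sum>d\<in>UNIV. \<Sum>b\<in>UNIV. \<Sum>a\<in>UNIV. f a b c d)" by (rule sw1)
  finally show ?thesis .
qed

lemma P4_cadb: "(\<Sum>a\<in>UNIV. \<Sum>b\<in>UNIV. \<Sum>c\<in>UNIV. \<Sum>d\<in>UNIV. f a b c d) = (\<Sum>c\<in>UNIV. \<Sum>a\<in>UNIV. \<Sum>d\<in>UNIV. \<Sum>b\<in>UNIV. f a b c d)"
proof -
  have "(\<Sum>a\<in>UNIV. \<Sum>b\<in>UNIV. \<Sum>c\<in>UNIV. \<Sum>d\<in>UNIV. f a b c d) = (\<Sum>a\<in>UNIV. \<Sum>c\<in>UNIV. \<Sum>b\<in>UNIV. \<Sum>d\<in>UNIV. f a b c d)" by (rule sw1)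
  also have "... = (\<Sum>a\<in>UNIV. \<Sum>c\<in>UNIV. \<Sum>d\<in>UNIV. \<Sum>b\<in>UNIV. f a b c d)" by (rule sw2)
  also have "... = (\<Sum>c\<in>UNIV. \<Sum>a\<in>UNIV. \<Sum>d\<in>UNIV. \<Sum>b\<in>UNIV. f a b c d)" by (rule sum.swap)
  finally show ?thesis .
qed

context fixes x y p q r :: "'n \<Rightarrow> real" begin
lemma S1: "(\<Sum> s\<in>UNIV. (\<Sum> j\<in>UNIV. X j s * q j) * (\<Sum> l\<in>UNIV. Y s l * x l)) = (\<Sum>j\<in>UNIV. \<Sum>m\<in>UNIV. (\<Sum>k\<in>UNIV. X j k * Y k m) * x m * q j)"
proof -
  have "(\<Sum> s\<in>UNIV. (\<Sum> j\<in>UNIV. X j s * q j) * (\<Sum> l\<in>UNIV. Y s l * x l)) = (\<Sum>s\<in>UNIV. \<Sum>j\<in>UNIV. \<Sum>l\<in>UNIV. X j s * q j * (Y s l * x l))" by ((simp only: sum_distrib_right)?, (simp only: sum_distrib_left)?)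
  also have "... = (\<Sum>j\<in>UNIV. \<Sum>l\<in>UNIV. \<Sum>s\<in>UNIV. X j s * q j * (Y s l * x l))" by (rule P3_bca)
  also have "... = (\<Sum>j\<in>UNIV. \<Sum>m\<in>UNIV. (\<Sum>k\<in>UNIV. X j k * Y k m) * x m * q j)" by (simp add: sum_distrib_left sum_distrib_right mult_ac)
  finally show ?thesis .
qed

lemma S4: "(\<Sum> s\<in>UNIV. (\<Sum> k\<in>UNIV. X s k * x k) * (\<Sum> k\<in>UNIV. Y k s * q k)) = (\<Sum>j\<in>UNIV. \<Sum>m\<in>UNIV. (\<Sum>k\<in>UNIV. X k m * Y j k) * x m * q j)"
proof -
  have "(\<Sum> s\<in>UNIV. (\<Sum> k\<in>UNIV. X s k * x k) * (\<Sum> k\<in>UNIV. Y k s * q k)) = (\<Sum>s\<in>UNIV. \<Sum>k\<in>UNIV. \<Sum>t\<in>UNIV. X s k * x k * (Y t s * q t))" by ((simp only: sum_distrib_right)?, (simp only: sum_distrib_left)?)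
  also have "... = (\<Sum>t\<in>UNIV. \<Sum>k\<in>UNIV. \<Sum>s\<in>UNIV. X s k * x k * (Y t s * q t))" by (rule P3_cba)
  also have "... = (\<Sum>j\<in>UNIV. \<Sum>m\<in>UNIV. (\<Sum>k\<in>UNIV. X k m * Y j k) * x m * q j)" by (simp add: sum_distrib_left sum_distrib_right mult_ac)
  finally show ?thesis .
qed

lemma S8: "(\<Sum> s\<in>UNIV. Z s * (\<Sum> t\<in>UNIV. (\<Sum> k\<in>UNIV. X k s t * q k) * x t)) = (\<Sum>j\<in>UNIV. \<Sum>m\<in>UNIV. (\<Sum>k\<in>UNIV. Z k * X j k m) * x m * q j)"
proof -
  have "(\<Sum> s\<in>UNIV. Z s * (\<Sum> t\<in>UNIV. (\<Sum> k\<in>UNIV. X k s t * q k) * x t)) = (\<Sum>s\<in>UNIV. \<Sum>t\<in>UNIV. \<Sum>k\<in>UNIV. Z s * (X k s t * q k * x t))" by ((simp only: sum_distrib_right)?, (simp only: sum_distrib_left)?)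
  also have "... = (\<Sum>k\<in>UNIV. \<Sum>t\<in>UNIV. \<Sum>s\<in>UNIV. Z s * (X k s t * q k * x t))" by (rule P3_cba)
  also have "... = (\<Sum>j\<in>UNIV. \<Sum>m\<in>UNIV. (\<Sum>k\<in>UNIV. Z k * X j k m) * x m * q j)" by (simp add: sum_distrib_left sum_distrib_right mult_ac)
  finally show ?thesis .
qed

lemma S10: "(\<Sum> s\<in>UNIV. Z s * (\<Sum> t\<in>UNIV. (\<Sum> j\<in>UNIV. X t s j * x j) * q t)) = (\<Sum>j\<in>UNIV. \<Sum>m\<in>UNIV. (\<Sum>k\<in>UNIV. Z k * X j k m) * x m * q j)"
proof -
  have "(\<Sum> s\<in>UNIV. Z s * (\<Sum> t\<in>UNIV. (\<Sum> j\<in>UNIV. X t s j * x j) * q t)) = (\<Sum>s\<in>UNIV. \<Sum>t\<in>UNIV. \<Sum>j\<in>UNIV. Z s * (X t s j * x j * q t))" by ((simp only: sum_distrib_right)?, (simp only: sum_distrib_left)?)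
  also have "... = (\<Sum>t\<in>UNIV. \<Sum>j\<in>UNIV. \<Sum>s\<in>UNIV. Z s * (X t s j * x j * q t))" by (rule P3_bca)
  also have "... = (\<Sum>j\<in>UNIV. \<Sum>m\<in>UNIV. (\<Sum>k\<in>UNIV. Z k * X j k m) * x m * q j)" by (simp add: sum_distrib_left sum_distrib_right mult_ac)
  finally show ?thesis .
qed

lemma S12: "(\<Sum> j\<in>UNIV. \<Sum> k\<in>UNIV. X j k * x j * (\<Sum> t\<in>UNIV. Y k t * q t)) = (\<Sum>j\<in>UNIV. \<Sum>m\<in>UNIV. (\<Sum>k\<in>UNIV. X m k * Y k j) * x m * q j)"
proof -
  have "(\<Sum> j\<in>UNIV. \<Sum> k\<in>UNIV. X j k * x j * (\<Sum> t\<in>UNIV. Y k t * q t)) = (\<Sum>j\<in>UNIV. \<Sum>k\<in>UNIV. \<Sum>t\<in>UNIV. X j k * x j * (Y k t * q t))" by ((simp only: sum_distrib_right)?, (simp only: sum_distrib_left)?)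
  also have "... = (\<Sum>t\<in>UNIV. \<Sum>j\<in>UNIV. \<Sum>k\<in>UNIV. X j k * x j * (Y k t * q t))" by (rule P3_cab)
  also have "... = (\<Sum>j\<in>UNIV. \<Sum>m\<in>UNIV. (\<Sum>k\<in>UNIV. X m k * Y k j) * x m * q j)" by (simp add: sum_distrib_left sum_distrib_right mult_ac)
  finally show ?thesis .
qed

lemma S14: "(\<Sum> j\<in>UNIV. Z j * (\<Sum> s\<in>UNIV. (\<Sum> t\<in>UNIV. X j t s * q t) * x s)) = (\<Sum>j\<in>UNIV. \<Sum>m\<in>UNIV. (\<Sum>k\<in>UNIV. Z k * X k j m) * x m * q j)"
proof -
  have "(\<Sum> j\<in>UNIV. Z j * (\<Sum> s\<in>UNIV. (\<Sum> t\<in>UNIV. X j t s * q t) * x s)) = (\<Sum>j\<in>UNIV. \<Sum>s\<in>UNIV. \<Sum>t\<in>UNIV. Z j * (X j t s * q t * x s))" by ((simp only: sum_distrib_right)?, (simp only: sum_distrib_left)?)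
  also have "... = (\<Sum>t\<in>UNIV. \<Sum>s\<in>UNIV. \<Sum>j\<in>UNIV. Z j * (X j t s * q t * x s))" by (rule P3_cba)
  also have "... = (\<Sum>j\<in>UNIV. \<Sum>m\<in>UNIV. (\<Sum>k\<in>UNIV. Z k * X k j m) * x m * q j)" by (simp add: sum_distrib_left sum_distrib_right mult_ac)
  finally show ?thesis .
qed

lemma S17: "(\<Sum> j\<in>UNIV. Z j * (\<Sum> s\<in>UNIV. (\<Sum> k\<in>UNIV. X j s k * x k) * q s)) = (\<Sum>j\<in>UNIV. \<Sum>m\<in>UNIV. (\<Sum>k\<in>UNIV. Z k * X k j m) * x m * q j)"
proof -
  have "(\<Sum> j\<in>UNIV. Z j * (\<Sum> s\<in>UNIV. (\<Sum> k\<in>UNIV. X j s k * x k) * q s)) = (\<Sum>j\<in>UNIV. \<Sum>s\<in>UNIV. \<Sum>k\<in>UNIV. Z j * (X j s k * x k * q s))" by ((simp only: sum_distrib_right)?, (simp only: sum_distrib_left)?)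
  also have "... = (\<Sum>s\<in>UNIV. \<Sum>k\<in>UNIV. \<Sum>j\<in>UNIV. Z j * (X j s k * x k * q s))" by (rule P3_bca)
  also have "... = (\<Sum>j\<in>UNIV. \<Sum>m\<in>UNIV. (\<Sum>k\<in>UNIV. Z k * X k j m) * x m * q j)" by (simp add: sum_distrib_left sum_distrib_right mult_ac)
  finally show ?thesis .
qed

lemma S11: "(\<Sum> s\<in>UNIV. Z s * (\<Sum> t\<in>UNIV. Y t s * r t)) = (\<Sum>j\<in>UNIV. (\<Sum>k\<in>UNIV. Z k * Y j k) * r j)"
proof -
  have "(\<Sum> s\<in>UNIV. Z s * (\<Sum> t\<in>UNIV. Y t s * r t)) = (\<Sum>s\<in>UNIV. \<Sum>t\<in>UNIV. Z s * (Y t s * r t))" by ((simp only: sum_distrib_right)?, (simp only: sum_distrib_left)?)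
  also have "... = (\<Sum>t\<in>UNIV. \<Sum>s\<in>UNIV. Z s * (Y t s * r t))" by (rule sum.swap)
  also have "... = (\<Sum>j\<in>UNIV. (\<Sum>k\<in>UNIV. Z k * Y j k) * r j)" by (simp add: sum_distrib_left sum_distrib_right mult_ac)
  finally show ?thesis .
qed

lemma S18: "(\<Sum> j\<in>UNIV. Z j * (\<Sum> s\<in>UNIV. Y j s * r s)) = (\<Sum>j\<in>UNIV. (\<Sum>k\<in>UNIV. Z k * Y k j) * r j)"
proof -
  have "(\<Sum> j\<in>UNIV. Z j * (\<Sum> s\<in>UNIV. Y j s * r s)) = (\<Sum>j\<in>UNIV. \<Sum>s\<in>UNIV. Z j * (Y j s * r s))" by ((simp only: sum_distrib_right)?, (simp only: sum_distrib_left)?)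
  also have "... = (\<Sum>s\<in>UNIV. \<Sum>j\<in>UNIV. Z j * (Y j s * r s))" by (rule sum.swap)
  also have "... = (\<Sum>j\<in>UNIV. (\<Sum>k\<in>UNIV. Z k * Y k j) * r j)" by (simp add: sum_distrib_left sum_distrib_right mult_ac)
  finally show ?thesis .
qed

lemma S2: "(\<Sum> s\<in>UNIV. (\<Sum> j\<in>UNIV. \<Sum> k\<in>UNIV. X j k s * x k * p j) * (\<Sum> l\<in>UNIV. Y s l * x l)) = (\<Sum>j\<in>UNIV. \<Sum>m\<in>UNIV. \<Sum>l\<in>UNIV. (\<Sum>k\<in>UNIV. X j m k * Y k l) * x m * x l * p j)"
proof -
  have "(\<Sum> s\<in>UNIV. (\<Sum> j\<in>UNIV. \<Sum> k\<in>UNIV. X j k s * x k * p j) * (\<Sum> l\<in>UNIV. Y s l * x l)) = (\<Sum>s\<in>UNIV. \<Sum>j\<in>UNIV. \<Sum>k\<in>UNIV. \<Sum>l\<in>UNIV. X j k s * x k * p j * (Y s l * x l))" by ((simp only: sum_distrib_right)?, (simp only: sum_distrib_left)?)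
  also have "... = (\<Sum>j\<in>UNIV. \<Sum>k\<in>UNIV. \<Sum>l\<in>UNIV. \<Sum>s\<in>UNIV. X j k s * x k * p j * (Y s l * x l))" by (rule P4_bcda)
  also have "... = (\<Sum>j\<in>UNIV. \<Sum>m\<in>UNIV. \<Sum>l\<in>UNIV. (\<Sum>k\<in>UNIV. X j m k * Y k l) * x m * x l * p j)" by (simp add: sum_distrib_left sum_distrib_right mult_ac)
  finally show ?thesis .
qed

lemma S3: "(\<Sum> s\<in>UNIV. (\<Sum> k\<in>UNIV. X s k * x k) * (\<Sum> t\<in>UNIV. \<Sum> j\<in>UNIV. Y t s j * x j * p t)) = (\<Sum>j\<in>UNIV. \<Sum>m\<in>UNIV. \<Sum>l\<in>UNIV. (\<Sum>k\<in>UNIV. X k m * Y j k l) * x m * x l * p j)"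
proof -
  have "(\<Sum> s\<in>UNIV. (\<Sum> k\<in>UNIV. X s k * x k) * (\<Sum> t\<in>UNIV. \<Sum> j\<in>UNIV. Y t s j * x j * p t)) = (\<Sum>s\<in>UNIV. \<Sum>k\<in>UNIV. \<Sum>t\<in>UNIV. \<Sum>j\<in>UNIV. X s k * x k * (Y t s j * x j * p t))" by ((simp only: sum_distrib_right)?, (simp only: sum_distrib_left)?)
  also have "... = (\<Sum>t\<in>UNIV. \<Sum>k\<in>UNIV. \<Sum>j\<in>UNIV. \<Sum>s\<in>UNIV. X s k * x k * (Y t s j * x j * p t))" by (rule P4_cbda)
  also have "... = (\<Sum>j\<in>UNIV. \<Sum>m\<in>UNIV. \<Sum>l\<in>UNIV. (\<Sum>k\<in>UNIV. X k m * Y j k l) * x m * x l * p j)" by (simp add: sum_distrib_left sum_distrib_right mult_ac)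
  finally show ?thesis .
qed

lemma S5: "(\<Sum> s\<in>UNIV. (\<Sum> j\<in>UNIV. X j s * p j) * (\<Sum> t\<in>UNIV. (\<Sum> l\<in>UNIV. Y s l t * x l) * x t)) = (\<Sum>j\<in>UNIV. \<Sum>m\<in>UNIV. \<Sum>l\<in>UNIV. (\<Sum>k\<in>UNIV. X j k * Y k m l) * x m * x l * p j)"
proof -
  have "(\<Sum> s\<in>UNIV. (\<Sum> j\<in>UNIV. X j s * p j) * (\<Sum> t\<in>UNIV. (\<Sum> l\<in>UNIV. Y s l t * x l) * x t)) = (\<Sum>s\<in>UNIV. \<Sum>j\<in>UNIV. \<Sum>t\<in>UNIV. \<Sum>l\<in>UNIV. X j s * p j * (Y s l t * x l * x t))" by ((simp only: sum_distrib_right)?, (simp only: sum_distrib_left)?)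
  also have "... = (\<Sum>j\<in>UNIV. \<Sum>l\<in>UNIV. \<Sum>t\<in>UNIV. \<Sum>s\<in>UNIV. X j s * p j * (Y s l t * x l * x t))" by (rule P4_bdca)
  also have "... = (\<Sum>j\<in>UNIV. \<Sum>m\<in>UNIV. \<Sum>l\<in>UNIV. (\<Sum>k\<in>UNIV. X j k * Y k m l) * x m * x l * p j)" by (simp add: sum_distrib_left sum_distrib_right mult_ac)
  finally show ?thesis .
qed

lemma S7: "(\<Sum> s\<in>UNIV. Z s * (\<Sum> t\<in>UNIV. (\<Sum> k\<in>UNIV. \<Sum> j\<in>UNIV. X k s j t * x j * p k) * x t)) = (\<Sum>j\<in>UNIV. \<Sum>m\<in>UNIV. \<Sum>l\<in>UNIV. (\<Sum>k\<in>UNIV. Z k * X j k m l) * x m * x l * p j)"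
proof -
  have "(\<Sum> s\<in>UNIV. Z s * (\<Sum> t\<in>UNIV. (\<Sum> k\<in>UNIV. \<Sum> j\<in>UNIV. X k s j t * x j * p k) * x t)) = (\<Sum>s\<in>UNIV. \<Sum>t\<in>UNIV. \<Sum>k\<in>UNIV. \<Sum>j\<in>UNIV. Z s * (X k s j t * x j * p k * x t))" by ((simp only: sum_distrib_right)?, (simp only: sum_distrib_left)?)
  also have "... = (\<Sum>k\<in>UNIV. \<Sum>j\<in>UNIV. \<Sum>t\<in>UNIV. \<Sum>s\<in>UNIV. Z s * (X k s j t * x j * p k * x t))" by (rule P4_cdba)
  also have "... = (\<Sum>j\<in>UNIV. \<Sum>m\<in>UNIV. \<Sum>l\<in>UNIV. (\<Sum>k\<in>UNIV. Z k * X j k m l) * x m * x l * p j)" by (simp add: sum_distrib_left sum_distrib_right mult_ac)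
  finally show ?thesis .
qed

lemma S13: "(\<Sum> j\<in>UNIV. \<Sum> k\<in>UNIV. X j k * x j * (\<Sum> t\<in>UNIV. \<Sum> w\<in>UNIV. Y k t w * x w * p t)) = (\<Sum>j\<in>UNIV. \<Sum>m\<in>UNIV. \<Sum>l\<in>UNIV. (\<Sum>k\<in>UNIV. X m k * Y k j l) * x m * x l * p j)"
proof -
  have "(\<Sum> j\<in>UNIV. \<Sum> k\<in>UNIV. X j k * x j * (\<Sum> t\<in>UNIV. \<Sum> w\<in>UNIV. Y k t w * x w * p t)) = (\<Sum>j\<in>UNIV. \<Sum>k\<in>UNIV. \<Sum>t\<in>UNIV. \<Sum>w\<in>UNIV. X j k * x j * (Y k t w * x w * p t))" by ((simp only: sum_distrib_right)?, (simp only: sum_distrib_left)?)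
  also have "... = (\<Sum>t\<in>UNIV. \<Sum>j\<in>UNIV. \<Sum>w\<in>UNIV. \<Sum>k\<in>UNIV. X j k * x j * (Y k t w * x w * p t))" by (rule P4_cadb)
  also have "... = (\<Sum>j\<in>UNIV. \<Sum>m\<in>UNIV. \<Sum>l\<in>UNIV. (\<Sum>k\<in>UNIV. X m k * Y k j l) * x m * x l * p j)" by (simp add: sum_distrib_left sum_distrib_right mult_ac)
  finally show ?thesis .
qed

lemma S15: "(\<Sum> j\<in>UNIV. Z j * (\<Sum> s\<in>UNIV. (\<Sum> t\<in>UNIV. \<Sum> k\<in>UNIV. X j t k s * x k * p t) * x s)) = (\<Sum>j\<in>UNIV. \<Sum>m\<in>UNIV. \<Sum>l\<in>UNIV. (\<Sum>k\<in>UNIV. Z k * X k j m l) * x m * x l * p j)"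
proof -
  have "(\<Sum> j\<in>UNIV. Z j * (\<Sum> s\<in>UNIV. (\<Sum> t\<in>UNIV. \<Sum> k\<in>UNIV. X j t k s * x k * p t) * x s)) = (\<Sum>j\<in>UNIV. \<Sum>s\<in>UNIV. \<Sum>t\<in>UNIV. \<Sum>k\<in>UNIV. Z j * (X j t k s * x k * p t * x s))" by ((simp only: sum_distrib_right)?, (simp only: sum_distrib_left)?)
  also have "... = (\<Sum>t\<in>UNIV. \<Sum>k\<in>UNIV. \<Sum>s\<in>UNIV. \<Sum>j\<in>UNIV. Z j * (X j t k s * x k * p t * x s))" by (rule P4_cdba)
  also have "... = (\<Sum>j\<in>UNIV. \<Sum>m\<in>UNIV. \<Sum>l\<in>UNIV. (\<Sum>k\<in>UNIV. Z k * X k j m l) * x m * x l * p j)" by (simp add: sum_distrib_left sum_distrib_right mult_ac)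
  finally show ?thesis .
qed

end


definition polyE :: "('n \<Rightarrow> real) \<Rightarrow> ('n \<Rightarrow> 'n \<Rightarrow> real) \<Rightarrow> ('n \<Rightarrow> 'n \<Rightarrow> real) \<Rightarrow> ('n \<Rightarrow> 'n \<Rightarrow> 'n \<Rightarrow> real)
   \<Rightarrow> ('n \<Rightarrow> real) \<Rightarrow> ('n \<Rightarrow> real) \<Rightarrow> ('n \<Rightarrow> real) \<Rightarrow> ('n \<Rightarrow> real) \<Rightarrow> ('n \<Rightarrow> real) \<Rightarrow> real" where
  "polyE c1 c2 c3 c4 x y p q r = (\<Sum> j\<in>UNIV. c1 j * r j) + (\<Sum> j\<in>UNIV. \<Sum> m\<in>UNIV. c2 j m * x m * q j)
     + (\<Sum> j\<in>UNIV. \<Sum> m\<in>UNIV. c3 j m * y m * p j) + (\<Sum> j\<in>UNIV. \<Sum> m\<in>UNIV. \<Sum> l\<in>UNIV. c4 j m l * x m * x l * p j)"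

definition K1 :: "('n \<Rightarrow> 'n \<Rightarrow> ('n \<Rightarrow> real) \<Rightarrow> real) \<Rightarrow> ('n \<Rightarrow> 'n \<Rightarrow> ('n \<Rightarrow> real) \<Rightarrow> real) \<Rightarrow> 'n \<Rightarrow> ('n \<Rightarrow> real) \<Rightarrow> 'n \<Rightarrow> real" where
  "K1 V G i u j = (\<Sum> k\<in>UNIV. G i k u * V j k u) - (\<Sum> k\<in>UNIV. V i k u * G k j u)"

definition K2 :: "('n \<Rightarrow> 'n \<Rightarrow> ('n \<Rightarrow> real) \<Rightarrow> real) \<Rightarrow> ('n \<Rightarrow> 'n \<Rightarrow> ('n \<Rightarrow> real) \<Rightarrow> real) \<Rightarrow> ('n \<Rightarrow> 'n \<Rightarrow> 'n \<Rightarrow> ('n \<Rightarrow> real) \<Rightarrow> real) \<Rightarrow> 'n \<Rightarrow> ('n \<Rightarrow> real) \<Rightarrow> 'n \<Rightarrow> 'n \<Rightarrow> real" where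
  "K2 V G Gam i u j m = (\<Sum> k\<in>UNIV. pd (G i j) k u * V k m u) + (\<Sum> k\<in>UNIV. Gam i k m u * V j k u)
    + (\<Sum> k\<in>UNIV. G i k u * pd (V j k) m u) + (\<Sum> k\<in>UNIV. G i k u * (pd (V j k) m u - pd (V j m) k u))
    - (\<Sum> k\<in>UNIV. pd (V i m) k u * G k j u) - (\<Sum> k\<in>UNIV. V i k u * pd (G k j) m u) - (\<Sum> k\<in>UNIV. V i k u * Gam k j m u)"

definition K3 :: "('n \<Rightarrow> 'n \<Rightarrow> ('n \<Rightarrow> real) \<Rightarrow> real) \<Rightarrow> ('n \<Rightarrow> 'n \<Rightarrow> ('n \<Rightarrow> real) \<Rightarrow> real) \<Rightarrow> ('n \<Rightarrow> 'n \<Rightarrow> 'n \<Rightarrow> ('n \<Rightarrow> real) \<Rightarrow> real) \<Rightarrow> 'n \<Rightarrow> ('n \<Rightarrow> real) \<Rightarrow> 'n \<Rightarrow> 'n \<Rightarrow> real" where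
  "K3 V G Gam i u j m = (\<Sum> k\<in>UNIV. Gam i j k u * V k m u) + (\<Sum> k\<in>UNIV. G i k u * (pd (V j k) m u - pd (V j m) k u))
    - (\<Sum> k\<in>UNIV. V i k u * Gam k j m u)"

definition K4 :: "('n \<Rightarrow> 'n \<Rightarrow> ('n \<Rightarrow> real) \<Rightarrow> real) \<Rightarrow> ('n \<Rightarrow> 'n \<Rightarrow> ('n \<Rightarrow> real) \<Rightarrow> real) \<Rightarrow> ('n \<Rightarrow> 'n \<Rightarrow> 'n \<Rightarrow> ('n \<Rightarrow> real) \<Rightarrow> real) \<Rightarrow> 'n \<Rightarrow> ('n \<Rightarrow> real) \<Rightarrow> 'n \<Rightarrow> 'n \<Rightarrow> 'n \<Rightarrow> real" where
  "K4 V G Gam i u j m l = (\<Sum> k\<in>UNIV. pd (Gam i j m) k u * V k l u) + (\<Sum> k\<in>UNIV. Gam i k m u * (pd (V j k) l u - pd (V j l) k u))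
    + (\<Sum> k\<in>UNIV. Gam i j k u * pd (V k m) l u) + (\<Sum> k\<in>UNIV. G i k u * (pd (pd (V j k) m) l u - pd (pd (V j m) k) l u))
    - (\<Sum> k\<in>UNIV. pd (V i m) k u * Gam k j l u) - (\<Sum> k\<in>UNIV. V i k u * pd (Gam k j m) l u)"



lemma sum_le1: "(\<Sum>m\<le>(1::nat). f m) = f 0 + (f 1 :: real)"
  by (simp add: atMost_Suc)

lemma Dxn1: "Dxn 1 N f = Dx N f" by simp
lemma Suc01: "Suc 0 = 1" "Suc 1 = 2" by auto

context
  fixes \<Omega> :: "('n::finite \<Rightarrow> real) set"
    and V :: "'n \<Rightarrow> 'n \<Rightarrow> ('n \<Rightarrow> real) \<Rightarrow> real"
    and G :: "'n \<Rightarrow> 'n \<Rightarrow> ('n \<Rightarrow> real) \<Rightarrow> real"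
    and Gam :: "'n \<Rightarrow> 'n \<Rightarrow> 'n \<Rightarrow> ('n \<Rightarrow> real) \<Rightarrow> real"
    and a :: "'n jet" and b :: "'n jet"
  assumes V_smooth: "\<And>i j. smooth_fn \<Omega> (V i j)"
    and G_smooth: "\<And>i j. smooth_fn \<Omega> (G i j)"
    and Gam_smooth: "\<And>i j k. smooth_fn \<Omega> (Gam i j k)"
    and a0: "a 0 \<in> \<Omega>"
begin

lemmas dfs = dU_Aop0[where \<Omega>=\<Omega> and V=V and G=G and Gam=Gam and a=a, OF V_smooth G_smooth Gam_smooth a0] dU_Aop1[where \<Omega>=\<Omega> and V=V and G=G and Gam=Gam and a=a, OF V_smooth G_smooth Gam_smooth a0]
  dP_Aop0[where \<Omega>=\<Omega> and V=V and G=G and Gam=Gam and a=a, OF V_smooth G_smooth Gam_smooth a0] dP_Aop1[where \<Omega>=\<Omega> and V=V and G=G and Gam=Gam and a=a, OF V_smooth G_smooth Gam_smooth a0]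
  dU_Ut0[where \<Omega>=\<Omega> and V=V and G=G and Gam=Gam and a=a, OF V_smooth G_smooth Gam_smooth a0] dU_Ut1[where \<Omega>=\<Omega> and V=V and G=G and Gam=Gam and a=a, OF V_smooth G_smooth Gam_smooth a0]
  dP_Ut[where \<Omega>=\<Omega> and V=V and G=G and Gam=Gam and a=a, OF V_smooth G_smooth Gam_smooth a0]
  dU_Pt0[where \<Omega>=\<Omega> and V=V and G=G and Gam=Gam and a=a, OF V_smooth G_smooth Gam_smooth a0] dU_Pt1[where \<Omega>=\<Omega> and V=V and G=G and Gam=Gam and a=a, OF V_smooth G_smooth Gam_smooth a0]
  dP_Pt0[where \<Omega>=\<Omega> and V=V and G=G and Gam=Gam and a=a, OF V_smooth G_smooth Gam_smooth a0] dP_Pt1[where \<Omega>=\<Omega> and V=V and G=G and Gam=Gam and a=a, OF V_smooth G_smooth Gam_smooth a0]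

lemma decomp:
  defines "u \<equiv> a 0" and "x \<equiv> a 1" and "y \<equiv> a 2" and "p \<equiv> b 0" and "q \<equiv> b 1" and "r \<equiv> b 2"
  shows "ellFA V G Gam i a b =
     (\<Sum>s\<in>UNIV. (\<Sum>j\<in>UNIV. pd (G i j) s u * q j) * (\<Sum>l\<in>UNIV. V s l u * x l))
   + (\<Sum>s\<in>UNIV. (\<Sum>j\<in>UNIV. \<Sum>k\<in>UNIV. pd (Gam i j k) s u * x k * p j) * (\<Sum>l\<in>UNIV. V s l u * x l))
   + (\<Sum>s\<in>UNIV. (\<Sum>k\<in>UNIV. Gam i s k u * x k) * (\<Sum>k\<in>UNIV. \<Sum>j\<in>UNIV. (pd (V k s) j u - pd (V k j) s u) * x j * p k))
   + (\<Sum>s\<in>UNIV. (\<Sum>k\<in>UNIV. Gam i s k u * x k) * (\<Sum>k\<in>UNIV. V k s u * q k))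
   + (\<Sum>s\<in>UNIV. (\<Sum>j\<in>UNIV. Gam i j s u * p j) * (\<Sum>t\<in>UNIV. (\<Sum>l\<in>UNIV. pd (V s l) t u * x l) * x t))
   + (\<Sum>s\<in>UNIV. (\<Sum>j\<in>UNIV. Gam i j s u * p j) * (\<Sum>t\<in>UNIV. V s t u * y t))
   + (\<Sum>s\<in>UNIV. G i s u * (\<Sum>t\<in>UNIV. (\<Sum>k\<in>UNIV. \<Sum>j\<in>UNIV. (pd (pd (V k s) j) t u - pd (pd (V k j) s) t u) * x j * p k) * x t))
   + (\<Sum>s\<in>UNIV. G i s u * (\<Sum>t\<in>UNIV. (\<Sum>k\<in>UNIV. pd (V k s) t u * q k) * x t))
   + (\<Sum>s\<in>UNIV. G i s u * (\<Sum>t\<in>UNIV. (\<Sum>k\<in>UNIV. (pd (V k s) t u - pd (V k t) s u) * p k) * y t))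
   + (\<Sum>s\<in>UNIV. G i s u * (\<Sum>t\<in>UNIV. (\<Sum>j\<in>UNIV. (pd (V t s) j u - pd (V t j) s u) * x j) * q t))
   + (\<Sum>s\<in>UNIV. G i s u * (\<Sum>t\<in>UNIV. V t s u * r t))
   - (\<Sum>j\<in>UNIV. \<Sum>k\<in>UNIV. pd (V i j) k u * x j * (\<Sum>j'\<in>UNIV. G k j' u * q j'))
   - (\<Sum>j\<in>UNIV. \<Sum>k\<in>UNIV. pd (V i j) k u * x j * (\<Sum>j'\<in>UNIV. \<Sum>k'\<in>UNIV. Gam k j' k' u * x k' * p j'))
   - (\<Sum>j\<in>UNIV. V i j u * (\<Sum>s\<in>UNIV. (\<Sum>j'\<in>UNIV. pd (G j j') s u * q j') * x s))
   - (\<Sum>j\<in>UNIV. V i j u * (\<Sum>s\<in>UNIV. (\<Sum>j'\<in>UNIV. \<Sum>k\<in>UNIV. pd (Gam j j' k) s u * x k * p j') * x s))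
   - (\<Sum>j\<in>UNIV. V i j u * (\<Sum>s\<in>UNIV. (\<Sum>j'\<in>UNIV. Gam j j' s u * p j') * y s))
   - (\<Sum>j\<in>UNIV. V i j u * (\<Sum>s\<in>UNIV. (\<Sum>k\<in>UNIV. Gam j s k u * x k) * q s))
   - (\<Sum>j\<in>UNIV. V i j u * (\<Sum>s\<in>UNIV. G j s u * r s))"
  unfolding ellFA_def Dt_def sum_le1 Dxn1 Dxn.simps(1) Dx_def sum_le1 Suc01
  apply (simp only: dfs Aop_def Ut_def Pt_def u_def[symmetric] x_def[symmetric] y_def[symmetric]
     p_def[symmetric] q_def[symmetric] r_def[symmetric])
  apply (simp only: sum.distrib distrib_left distrib_right mult_zero_left mult_zero_right add_0 add_0_right
     sum.neutral_const diff_0_right)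
  done

lemma ellFA_poly: "ellFA V G Gam i a b = polyE (K1 V G i (a 0)) (K2 V G Gam i (a 0)) (K3 V G Gam i (a 0)) (K4 V G Gam i (a 0))
   (a 1) (a 2) (b 0) (b 1) (b 2)"
proof -
  have h1: "(\<Sum>s\<in>UNIV. (\<Sum>j\<in>UNIV. pd (G i j) s (a 0) * b 1 j) * (\<Sum>l\<in>UNIV. V s l (a 0) * a 1 l)) = (\<Sum> j\<in>UNIV. \<Sum> m\<in>UNIV. (\<Sum> k\<in>UNIV. pd (G i j) k (a 0) * V k m (a 0)) * a 1 m * b 1 j)" by (rule S1)
  have h2: "(\<Sum>s\<in>UNIV. (\<Sum>j\<in>UNIV. \<Sum>k\<in>UNIV. pd (Gam i j k) s (a 0) * a 1 k * b 0 j) * (\<Sum>l\<in>UNIV. V s l (a 0) * a 1 l)) = (\<Sum> j\<in>UNIV. \<Sum> m\<in>UNIV. \<Sum> l\<in>UNIV. (\<Sum> k\<in>UNIV. pd (Gam i j m) k (a 0) * V k l (a 0)) * a 1 m * a 1 l * b 0 j)" by (rule S2)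
  have h3: "(\<Sum>s\<in>UNIV. (\<Sum>k\<in>UNIV. Gam i s k (a 0) * a 1 k) * (\<Sum>k\<in>UNIV. \<Sum>j\<in>UNIV. (pd (V k s) j (a 0) - pd (V k j) s (a 0)) * a 1 j * b 0 k)) = (\<Sum> j\<in>UNIV. \<Sum> m\<in>UNIV. \<Sum> l\<in>UNIV. (\<Sum> k\<in>UNIV. Gam i k m (a 0) * (pd (V j k) l (a 0) - pd (V j l) k (a 0))) * a 1 m * a 1 l * b 0 j)" by (rule S3)
  have h4: "(\<Sum>s\<in>UNIV. (\<Sum>k\<in>UNIV. Gam i s k (a 0) * a 1 k) * (\<Sum>k\<in>UNIV. V k s (a 0) * b 1 k)) = (\<Sum> j\<in>UNIV. \<Sum> m\<in>UNIV. (\<Sum> k\<in>UNIV. Gam i k m (a 0) * V j k (a 0)) * a 1 m * b 1 j)" by (rule S4)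
  have h5: "(\<Sum>s\<in>UNIV. (\<Sum>j\<in>UNIV. Gam i j s (a 0) * b 0 j) * (\<Sum>t\<in>UNIV. (\<Sum>l\<in>UNIV. pd (V s l) t (a 0) * a 1 l) * a 1 t)) = (\<Sum> j\<in>UNIV. \<Sum> m\<in>UNIV. \<Sum> l\<in>UNIV. (\<Sum> k\<in>UNIV. Gam i j k (a 0) * pd (V k m) l (a 0)) * a 1 m * a 1 l * b 0 j)" by (rule S5)
  have h6: "(\<Sum>s\<in>UNIV. (\<Sum>j\<in>UNIV. Gam i j s (a 0) * b 0 j) * (\<Sum>t\<in>UNIV. V s t (a 0) * a 2 t)) = (\<Sum> j\<in>UNIV. \<Sum> m\<in>UNIV. (\<Sum> k\<in>UNIV. Gam i j k (a 0) * V k m (a 0)) * a 2 m * b 0 j)" by (rule S1)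
  have h7: "(\<Sum>s\<in>UNIV. G i s (a 0) * (\<Sum>t\<in>UNIV. (\<Sum>k\<in>UNIV. \<Sum>j\<in>UNIV. (pd (pd (V k s) j) t (a 0) - pd (pd (V k j) s) t (a 0)) * a 1 j * b 0 k) * a 1 t)) = (\<Sum> j\<in>UNIV. \<Sum> m\<in>UNIV. \<Sum> l\<in>UNIV. (\<Sum> k\<in>UNIV. G i k (a 0) * (pd (pd (V j k) m) l (a 0) - pd (pd (V j m) k) l (a 0))) * a 1 m * a 1 l * b 0 j)" by (rule S7)
  have h8: "(\<Sum>s\<in>UNIV. G i s (a 0) * (\<Sum>t\<in>UNIV. (\<Sum>k\<in>UNIV. pd (V k s) t (a 0) * b 1 k) * a 1 t)) = (\<Sum> j\<in>UNIV. \<Sum> m\<in>UNIV. (\<Sum> k\<in>UNIV. G i k (a 0) * pd (V j k) m (a 0)) * a 1 m * b 1 j)" by (rule S8)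
  have h9: "(\<Sum>s\<in>UNIV. G i s (a 0) * (\<Sum>t\<in>UNIV. (\<Sum>k\<in>UNIV. (pd (V k s) t (a 0) - pd (V k t) s (a 0)) * b 0 k) * a 2 t)) = (\<Sum> j\<in>UNIV. \<Sum> m\<in>UNIV. (\<Sum> k\<in>UNIV. G i k (a 0) * (pd (V j k) m (a 0) - pd (V j m) k (a 0))) * a 2 m * b 0 j)" by (rule S8)
  have h10: "(\<Sum>s\<in>UNIV. G i s (a 0) * (\<Sum>t\<in>UNIV. (\<Sum>j\<in>UNIV. (pd (V t s) j (a 0) - pd (V t j) s (a 0)) * a 1 j) * b 1 t)) = (\<Sum> j\<in>UNIV. \<Sum> m\<in>UNIV. (\<Sum> k\<in>UNIV. G i k (a 0) * (pd (V j k) m (a 0) - pd (V j m) k (a 0))) * a 1 m * b 1 j)" by (rule S10)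
  have h11: "(\<Sum>s\<in>UNIV. G i s (a 0) * (\<Sum>t\<in>UNIV. V t s (a 0) * b 2 t)) = (\<Sum> j\<in>UNIV. (\<Sum> k\<in>UNIV. G i k (a 0) * V j k (a 0)) * b 2 j)" by (rule S11)
  have h12: "(\<Sum>j\<in>UNIV. \<Sum>k\<in>UNIV. pd (V i j) k (a 0) * a 1 j * (\<Sum>j'\<in>UNIV. G k j' (a 0) * b 1 j')) = (\<Sum> j\<in>UNIV. \<Sum> m\<in>UNIV. (\<Sum> k\<in>UNIV. pd (V i m) k (a 0) * G k j (a 0)) * a 1 m * b 1 j)" by (rule S12)
  have h13: "(\<Sum>j\<in>UNIV. \<Sum>k\<in>UNIV. pd (V i j) k (a 0) * a 1 j * (\<Sum>j'\<in>UNIV. \<Sum>k'\<in>UNIV. Gam k j' k' (a 0) * a 1 k' * b 0 j')) = (\<Sum> j\<in>UNIV. \<Sum> m\<in>UNIV. \<Sum> l\<in>UNIV. (\<Sum> k\<in>UNIV. pd (V i m) k (a 0) * Gam k j l (a 0)) * a 1 m * a 1 l * b 0 j)" by (rule S13)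
  have h14: "(\<Sum>j\<in>UNIV. V i j (a 0) * (\<Sum>s\<in>UNIV. (\<Sum>j'\<in>UNIV. pd (G j j') s (a 0) * b 1 j') * a 1 s)) = (\<Sum> j\<in>UNIV. \<Sum> m\<in>UNIV. (\<Sum> k\<in>UNIV. V i k (a 0) * pd (G k j) m (a 0)) * a 1 m * b 1 j)" by (rule S14)
  have h15: "(\<Sum>j\<in>UNIV. V i j (a 0) * (\<Sum>s\<in>UNIV. (\<Sum>j'\<in>UNIV. \<Sum>k\<in>UNIV. pd (Gam j j' k) s (a 0) * a 1 k * b 0 j') * a 1 s)) = (\<Sum> j\<in>UNIV. \<Sum> m\<in>UNIV. \<Sum> l\<in>UNIV. (\<Sum> k\<in>UNIV. V i k (a 0) * pd (Gam k j m) l (a 0)) * a 1 m * a 1 l * b 0 j)" by (rule S15)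
  have h16: "(\<Sum>j\<in>UNIV. V i j (a 0) * (\<Sum>s\<in>UNIV. (\<Sum>j'\<in>UNIV. Gam j j' s (a 0) * b 0 j') * a 2 s)) = (\<Sum> j\<in>UNIV. \<Sum> m\<in>UNIV. (\<Sum> k\<in>UNIV. V i k (a 0) * Gam k j m (a 0)) * a 2 m * b 0 j)" by (rule S14)
  have h17: "(\<Sum>j\<in>UNIV. V i j (a 0) * (\<Sum>s\<in>UNIV. (\<Sum>k\<in>UNIV. Gam j s k (a 0) * a 1 k) * b 1 s)) = (\<Sum> j\<in>UNIV. \<Sum> m\<in>UNIV. (\<Sum> k\<in>UNIV. V i k (a 0) * Gam k j m (a 0)) * a 1 m * b 1 j)" by (rule S17)
  have h18: "(\<Sum>j\<in>UNIV. V i j (a 0) * (\<Sum>s\<in>UNIV. G j s (a 0) * b 2 s)) = (\<Sum> j\<in>UNIV. (\<Sum> k\<in>UNIV. V i k (a 0) * G k j (a 0)) * b 2 j)" by (rule S18)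
  show ?thesis
    unfolding decomp h1 h2 h3 h4 h5 h6 h7 h8 h9 h10 h11 h12 h13 h14 h15 h16 h17 h18 polyE_def K1_def K2_def K3_def K4_def
    by (simp only: distrib_right left_diff_distrib sum.distrib sum_subtractf)
qed

end


lemma quad0:
  assumes "\<And>m l. c m l + c l m = (0::real)"
  shows "(\<Sum>m\<in>UNIV. \<Sum>l\<in>UNIV. c m l * x m * x l * z) = 0"
proof -
  have "(\<Sum>m\<in>UNIV. \<Sum>l\<in>UNIV. c m l * x m * x l * z) = (\<Sum>l\<in>UNIV. \<Sum>m\<in>UNIV. c m l * x m * x l * z)"
    by (rule sum.swap)
  also have "... = (\<Sum>m\<in>UNIV. \<Sum>l\<in>UNIV. - (c m l * x m * x l * z))"
  proof (rule sum.cong[OF refl], rule sum.cong[OF refl])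
    fix m l
    have "c l m = - c m l" using assms[of m l] by linarith
    then show "c l m * x l * x m * z = - (c m l * x m * x l * z)" by (simp add: mult_ac)
  qed
  also have "... = - (\<Sum>m\<in>UNIV. \<Sum>l\<in>UNIV. c m l * x m * x l * z)"
    by (simp add: sum_negf)
  finally show ?thesis by simp
qed

lemma polyA:
  assumes "\<And>j. c1 j = 0" "\<And>j m. c2 j m = 0" "\<And>j m. c3 j m = 0" "\<And>j m l. c4 j m l + c4 j l m = 0"
  shows "polyE c1 c2 c3 c4 x y p q r = 0"
proof -
  have q: "\<And>j. (\<Sum>m\<in>UNIV. \<Sum>l\<in>UNIV. c4 j m l * x m * x l * p j) = 0"
    by (rule quad0) (rule assms(4))
  show ?thesis unfolding polyE_def by (simp add: assms(1-3) q)
qed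

definition ev :: "'n \<Rightarrow> 'n \<Rightarrow> real" where "ev k = (\<lambda>t. if t = k then 1 else 0)"

lemma ev_L1: "(\<Sum>t\<in>UNIV. f t * ev k t) = (f k :: real)" for f :: "'n::finite \<Rightarrow> real"
proof -
  have "(\<Sum>t\<in>UNIV. f t * ev k t) = (\<Sum>t\<in>UNIV. if t = k then f t else 0)"
    by (rule sum.cong) (auto simp: ev_def)
  also have "... = f k" by (simp add: sum.delta)
  finally show ?thesis .
qed

lemma ev_L2: "(\<Sum>t\<in>UNIV. f t * ev k t * z) = (f k * z :: real)" for f :: "'n::finite \<Rightarrow> real"
  using ev_L1[of "\<lambda>t. f t * z" k] by (simp add: mult_ac)

lemma ev_L3: "(\<Sum>t\<in>UNIV. f t * z * ev k t) = (f k * z :: real)" for f :: "'n::finite \<Rightarrow> real"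
  using ev_L1[of "\<lambda>t. f t * z" k] by (simp add: mult_ac)

lemma polyB:
  fixes c1 :: "'n::finite \<Rightarrow> real"
  assumes "\<And>x y p q r. polyE c1 c2 c3 c4 x y p q r = 0"
  shows "c1 j = 0" "c2 j m = 0" "c3 j m = 0" "c4 j m l + c4 j l m = 0"
proof -
  show "c1 j = 0" using assms[of "\<lambda>_. 0" "\<lambda>_. 0" "\<lambda>_. 0" "\<lambda>_. 0" "ev j"]
    unfolding polyE_def by (simp only: ev_L1 mult_zero_right mult_zero_left sum.neutral_const add_0_right)
  show "c2 j m = 0" using assms[of "ev m" "\<lambda>_. 0" "\<lambda>_. 0" "ev j" "\<lambda>_. 0"]
    unfolding polyE_def by (simp only: ev_L1 ev_L2 mult_zero_right mult_zero_left sum.neutral_const add_0_right add_0)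
  show "c3 j m = 0" using assms[of "\<lambda>_. 0" "ev m" "ev j" "\<lambda>_. 0" "\<lambda>_. 0"]
    unfolding polyE_def by (simp only: ev_L1 ev_L2 mult_zero_right mult_zero_left sum.neutral_const add_0_right add_0)
  have A: "c4 j m m = 0" using assms[of "ev m" "\<lambda>_. 0" "ev j" "\<lambda>_. 0" "\<lambda>_. 0"]
    unfolding polyE_def by (simp only: ev_L1 ev_L2 ev_L3 mult_zero_right mult_zero_left sum.neutral_const add_0_right add_0)
  have B: "c4 j l l = 0" using assms[of "ev l" "\<lambda>_. 0" "ev j" "\<lambda>_. 0" "\<lambda>_. 0"]
    unfolding polyE_def by (simp only: ev_L1 ev_L2 ev_L3 mult_zero_right mult_zero_left sum.neutral_const add_0_right add_0)
  have C: "c4 j m m + c4 j m l + c4 j l m + c4 j l l = 0"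
    using assms[of "\<lambda>t. ev m t + ev l t" "\<lambda>_. 0" "ev j" "\<lambda>_. 0" "\<lambda>_. 0"]
    unfolding polyE_def by (simp only: distrib_left distrib_right sum.distrib ev_L1 ev_L2 ev_L3 mult_zero_right mult_zero_left sum.neutral_const add_0_right add_0 add.assoc)
  show "c4 j m l + c4 j l m = 0" using A B C by simp
qed

lemma conv1:
  assumes "\<And>i j. G i j u = G j i u"
  shows "(\<Sum>k\<in>UNIV. V i k u * G k j u) - (\<Sum>k\<in>UNIV. V j k u * G k i u) = - K1 V G i u j"
proof -
  have "(\<Sum>k\<in>UNIV. V j k u * G k i u) = (\<Sum>k\<in>UNIV. G i k u * V j k u)"
    by (rule sum.cong[OF refl]) (simp add: assms[of _ i] mult.commute)
  then show ?thesis unfolding K1_def by simp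
qed

lemma conv2:
  "(\<Sum>k\<in>UNIV.
          pd (G i j) k u * V k m u
        + G i k u * (pd (V j k) m u - pd (V j m) k u)
        + G i k u * pd (V j k) m u
        + Gam i k m u * V j k u
        - pd (V i m) k u * G k j u
        - V i k u * pd (G k j) m u
        - V i k u * Gam k j m u) = K2 V G Gam i u j m"
  unfolding K2_def sum_subtractf sum.distrib by linarith

lemma conv3:
  "(\<Sum>k\<in>UNIV.
          G i k u * (pd (V j k) h u - pd (V j h) k u)
        + Gam i j k u * V k h u
        - Gam k j h u * V i k u) = K3 V G Gam i u j h"
proof -
  have "(\<Sum>k\<in>UNIV. Gam k j h u * V i k u) = (\<Sum>k\<in>UNIV. V i k u * Gam k j h u)"
    by (simp add: mult.commute)
  then show ?thesis unfolding K3_def sum_subtractf sum.distrib by linarith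
qed

lemma conv4:
  "(\<Sum>k\<in>UNIV.
          G i k u * (pd (pd (V j k) m) l u + pd (pd (V j k) l) m u
                     - pd (pd (V j m) k) l u - pd (pd (V j l) k) m u)
        + pd (Gam i j m) k u * V k l u + pd (Gam i j l) k u * V k m u
        + Gam i j k u * pd (V k l) m u + Gam i j k u * pd (V k m) l u
        + Gam i k l u * pd (V j k) m u + Gam i k m u * pd (V j k) l u
        - Gam i k l u * pd (V j m) k u - Gam i k m u * pd (V j l) k u
        - Gam k j m u * pd (V i l) k u - Gam k j l u * pd (V i m) k u
        - pd (Gam k j m) l u * V i k u - pd (Gam k j l) m u * V i k u)
    = K4 V G Gam i u j m l + K4 V G Gam i u j l m"
  unfolding K4_def by (simp add: sum.distrib sum_subtractf algebra_simps)

theorem mainTheorem1: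
  fixes \<Omega> :: "('n::finite \<Rightarrow> real) set"
    and V :: "'n \<Rightarrow> 'n \<Rightarrow> ('n \<Rightarrow> real) \<Rightarrow> real"
    and G :: "'n \<Rightarrow> 'n \<Rightarrow> ('n \<Rightarrow> real) \<Rightarrow> real"
    and Gam :: "'n \<Rightarrow> 'n \<Rightarrow> 'n \<Rightarrow> ('n \<Rightarrow> real) \<Rightarrow> real"
  assumes \<Omega>_open: "open \<Omega>"
    and V_smooth: "\<And>i j. smooth_fn \<Omega> (V i j)"
    and G_smooth: "\<And>i j. smooth_fn \<Omega> (G i j)"
    and Gam_smooth: "\<And>i j k. smooth_fn \<Omega> (Gam i j k)"
    and nondeg: "\<And>u. u \<in> \<Omega> \<Longrightarrow> det (gmat G u) \<noteq> 0"
    and ham1: "\<And>u i j. u \<in> \<Omega> \<Longrightarrow> G i j u = G j i u"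
    and ham2: "\<And>u i j k. u \<in> \<Omega> \<Longrightarrow> pd (G i j) k u = Gam i j k u + Gam j i k u"
    and ham3: "\<And>u i j l. u \<in> \<Omega> \<Longrightarrow>
        (\<Sum>k\<in>UNIV. G i k u * Gam j l k u) = (\<Sum>k\<in>UNIV. G j k u * Gam i l k u)"
    and ham4: "\<And>u i j k l. u \<in> \<Omega> \<Longrightarrow>
        pd (Gam i j l) k u - pd (Gam i j k) l u
        + (\<Sum>s\<in>UNIV. Gam_low G Gam i k s u * Gam s j l u)
        - (\<Sum>s\<in>UNIV. Gam_low G Gam j k s u * Gam s i l u) = 0"
  shows "(\<forall>a b i. a 0 \<in> \<Omega> \<longrightarrow> ellFA V G Gam i a b = 0) \<longleftrightarrow>
    (\<forall>u\<in>\<Omega>.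
      (\<forall>i j. (\<Sum>k\<in>UNIV. V i k u * G k j u) - (\<Sum>k\<in>UNIV. V j k u * G k i u) = 0)
    \<and> (\<forall>i j m. (\<Sum>k\<in>UNIV.
          pd (G i j) k u * V k m u
        + G i k u * (pd (V j k) m u - pd (V j m) k u)
        + G i k u * pd (V j k) m u
        + Gam i k m u * V j k u
        - pd (V i m) k u * G k j u
        - V i k u * pd (G k j) m u
        - V i k u * Gam k j m u) = 0)
    \<and> (\<forall>i j h. (\<Sum>k\<in>UNIV.
          G i k u * (pd (V j k) h u - pd (V j h) k u)
        + Gam i j k u * V k h u
        - Gam k j h u * V i k u) = 0)
    \<and> (\<forall>i j m l. (\<Sum>k\<in>UNIV.
          G i k u * (pd (pd (V j k) m) l u + pd (pd (V j k) l) m u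
                     - pd (pd (V j m) k) l u - pd (pd (V j l) k) m u)
        + pd (Gam i j m) k u * V k l u + pd (Gam i j l) k u * V k m u
        + Gam i j k u * pd (V k l) m u + Gam i j k u * pd (V k m) l u
        + Gam i k l u * pd (V j k) m u + Gam i k m u * pd (V j k) l u
        - Gam i k l u * pd (V j m) k u - Gam i k m u * pd (V j l) k u
        - Gam k j m u * pd (V i l) k u - Gam k j l u * pd (V i m) k u
        - pd (Gam k j m) l u * V i k u - pd (Gam k j l) m u * V i k u) = 0))"
proof -
  have key: "ellFA V G Gam i a b = polyE (K1 V G i (a 0)) (K2 V G Gam i (a 0)) (K3 V G Gam i (a 0)) (K4 V G Gam i (a 0))
      (a 1) (a 2) (b 0) (b 1) (b 2)" if "a 0 \<in> \<Omega>" for i a b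
    by (rule ellFA_poly[where \<Omega>=\<Omega> and V=V and G=G and Gam=Gam, where a=a, OF V_smooth G_smooth Gam_smooth that])
  have conds: "(\<forall>a b. a 0 = u \<longrightarrow> ellFA V G Gam i a b = 0) \<longleftrightarrow>
     ((\<forall>j. K1 V G i u j = 0) \<and> (\<forall>j m. K2 V G Gam i u j m = 0) \<and> (\<forall>j m. K3 V G Gam i u j m = 0)
      \<and> (\<forall>j m l. K4 V G Gam i u j m l + K4 V G Gam i u j l m = 0))" if u: "u \<in> \<Omega>" for u i
  proof
    assume H: "\<forall>a b. a 0 = u \<longrightarrow> ellFA V G Gam i a b = 0"
    have P: "polyE (K1 V G i u) (K2 V G Gam i u) (K3 V G Gam i u) (K4 V G Gam i u) x y p q r = 0" for x y p q r
    proof -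
      define A :: "'n jet" where "A = (\<lambda>n. if n = 0 then u else if n = 1 then x else if n = 2 then y else (\<lambda>_. 0))"
      define B :: "'n jet" where "B = (\<lambda>n. if n = 0 then p else if n = 1 then q else if n = 2 then r else (\<lambda>_. 0))"
      have A0: "A 0 = u" "A 1 = x" "A 2 = y" unfolding A_def by auto
      have B0: "B 0 = p" "B 1 = q" "B 2 = r" unfolding B_def by auto
      have "ellFA V G Gam i A B = 0" using H A0 by blast
      moreover have "ellFA V G Gam i A B = polyE (K1 V G i u) (K2 V G Gam i u) (K3 V G Gam i u) (K4 V G Gam i u) x y p q r"
        using key[of A i B] u A0 B0 by simp
      ultimately show ?thesis by simp
    qed
    show "(\<forall>j. K1 V G i u j = 0) \<and> (\<forall>j m. K2 V G Gam i u j m = 0) \<and> (\<forall>j m. K3 V G Gam i u j m = 0)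
      \<and> (\<forall>j m l. K4 V G Gam i u j m l + K4 V G Gam i u j l m = 0)"
      using polyB[OF P] by blast
  next
    assume C: "(\<forall>j. K1 V G i u j = 0) \<and> (\<forall>j m. K2 V G Gam i u j m = 0) \<and> (\<forall>j m. K3 V G Gam i u j m = 0)
      \<and> (\<forall>j m l. K4 V G Gam i u j m l + K4 V G Gam i u j l m = 0)"
    show "\<forall>a b. a 0 = u \<longrightarrow> ellFA V G Gam i a b = 0"
    proof (intro allI impI)
      fix a b :: "'n jet" assume "a 0 = u"
      then show "ellFA V G Gam i a b = 0" using key[of a i b] u polyA[of "K1 V G i u" "K2 V G Gam i u" "K3 V G Gam i u" "K4 V G Gam i u"] C
        by simp
    qed
  qed
  have L: "(\<forall>a b i. a 0 \<in> \<Omega> \<longrightarrow> ellFA V G Gam i a b = 0) \<longleftrightarrow>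
     (\<forall>u\<in>\<Omega>. \<forall>i. ((\<forall>j. K1 V G i u j = 0) \<and> (\<forall>j m. K2 V G Gam i u j m = 0) \<and> (\<forall>j m. K3 V G Gam i u j m = 0)
      \<and> (\<forall>j m l. K4 V G Gam i u j m l + K4 V G Gam i u j l m = 0)))"
  proof -
    have L0: "(\<forall>a b i. a 0 \<in> \<Omega> \<longrightarrow> ellFA V G Gam i a b = 0) \<longleftrightarrow>
      (\<forall>u\<in>\<Omega>. \<forall>i. \<forall>a b. a 0 = u \<longrightarrow> ellFA V G Gam i a b = 0)" by blast
    show ?thesis unfolding L0
    proof (rule ball_cong[OF refl])
      fix u assume "u \<in> \<Omega>"
      then show "(\<forall>i. \<forall>a b. a 0 = u \<longrightarrow> ellFA V G Gam i a b = 0) = (\<forall>i. (\<forall>j. K1 V G i u j = 0) \<and> (\<forall>j m. K2 V G Gam i u j m = 0) \<and> (\<forall>j m. K3 V G Gam i u j m = 0)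
      \<and> (\<forall>j m l. K4 V G Gam i u j m l + K4 V G Gam i u j l m = 0))"
        by (simp only: conds[OF \<open>u \<in> \<Omega>\<close>])
    qed
  qed
  have E: "(\<forall>i. ((\<forall>j. K1 V G i u j = 0) \<and> (\<forall>j m. K2 V G Gam i u j m = 0) \<and> (\<forall>j m. K3 V G Gam i u j m = 0)
      \<and> (\<forall>j m l. K4 V G Gam i u j m l + K4 V G Gam i u j l m = 0))) \<longleftrightarrow>
    ((\<forall>i j. (\<Sum>k\<in>UNIV. V i k u * G k j u) - (\<Sum>k\<in>UNIV. V j k u * G k i u) = 0)
    \<and> (\<forall>i j m. (\<Sum>k\<in>UNIV.
          pd (G i j) k u * V k m u
        + G i k u * (pd (V j k) m u - pd (V j m) k u)
        + G i k u * pd (V j k) m u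
        + Gam i k m u * V j k u
        - pd (V i m) k u * G k j u
        - V i k u * pd (G k j) m u
        - V i k u * Gam k j m u) = 0)
    \<and> (\<forall>i j h. (\<Sum>k\<in>UNIV.
          G i k u * (pd (V j k) h u - pd (V j h) k u)
        + Gam i j k u * V k h u
        - Gam k j h u * V i k u) = 0)
    \<and> (\<forall>i j m l. (\<Sum>k\<in>UNIV.
          G i k u * (pd (pd (V j k) m) l u + pd (pd (V j k) l) m u
                     - pd (pd (V j m) k) l u - pd (pd (V j l) k) m u)
        + pd (Gam i j m) k u * V k l u + pd (Gam i j l) k u * V k m u
        + Gam i j k u * pd (V k l) m u + Gam i j k u * pd (V k m) l u
        + Gam i k l u * pd (V j k) m u + Gam i k m u * pd (V j k) l u
        - Gam i k l u * pd (V j m) k u - Gam i k m u * pd (V j l) k u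
        - Gam k j m u * pd (V i l) k u - Gam k j l u * pd (V i m) k u
        - pd (Gam k j m) l u * V i k u - pd (Gam k j l) m u * V i k u) = 0))" if u: "u \<in> \<Omega>" for u
  proof -
    have s: "\<And>i j. G i j u = G j i u" using ham1 u by blast
    show ?thesis by (simp only: conv1[where G=G and u=u, OF s] conv2 conv3 conv4) auto
  qed
  show ?thesis unfolding L by (rule ball_cong[OF refl]) (rule E)
qed


end
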